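(* Let $q$ be a prime power, $r\ge 1$ an integer, and $\mathcal{S}$ a $q^r$-divisible spanning set of $q^{r+1}$ points in $\mathrm{PG}(v-1,q)$. Then the number of hyperplanes $H$ with $\mathcal{S}\cap H=\emptyset$ is at least $\frac{q^{v-r-1}-1}{q-1}$.
   Context: $\mathrm{PG}(v-1,q)$ is the projective space of $\mathbb{F}_q^v$; points are $1$-dimensional and hyperplanes $(v-1)$-dimensional subspaces of $\mathbb{F}_q^v$. A set $\mathcal{S}$ of points is spanning if its points span $\mathbb{F}_q^v$, and it is $q^r$-divisible if $|\mathcal{S}\cap H|\equiv|\mathcal{S}|\pmod{q^r}$ for every hyperplane $H$. *)

theory Defs
  imports "HOL-Analysis.Analysis"
begin

text \<open>Projective geometry PG(v-1,q) modelled on F_q^v = 'a ^ 'n, where 'a is a finite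
field (q = CARD('a)) and v = CARD('n). Points and hyperplanes are subspaces.\<close>

definition proj_points :: "('a::field ^ 'n) set set" where
  "proj_points = {W. vec.subspace W \<and> vec.dim W = 1}"

definition proj_hyperplanes :: "('a::field ^ 'n) set set" where
  "proj_hyperplanes = {H. vec.subspace H \<and> vec.dim H = CARD('n) - 1}"

definition spanning_pointset :: "('a::field ^ 'n) set set \<Rightarrow> bool" where
  "spanning_pointset S \<longleftrightarrow> vec.span (\<Union>S) = UNIV"

definition pts_in :: "('a::field ^ 'n) set set \<Rightarrow> ('a ^ 'n) set \<Rightarrow> nat" where
  "pts_in S H = card {P \<in> S. P \<subseteq> H}"

definition divisible_pointset :: "nat \<Rightarrow> ('a::field ^ 'n) set set \<Rightarrow> bool" where
  "divisible_pointset m S \<longleftrightarrow>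
     (\<forall>H \<in> proj_hyperplanes. pts_in S H mod m = card S mod m)"

end

theory Submission imports Defs begin

definition dotp :: "'a::field^'n \<Rightarrow> 'a^'n \<Rightarrow> 'a" where
  "dotp u p = (\<Sum>i\<in>UNIV. u$i * p$i)"

lemma dotp_add_left: "dotp (u + w) p = dotp u p + dotp w p"
  by (simp add: dotp_def distrib_right sum.distrib)
lemma dotp_scale_left: "dotp (c *s u) p = c * dotp u p"
  by (simp add: dotp_def sum_distrib_left mult.assoc)
lemma dotp_diff_left: "dotp (u - w) p = dotp u p - dotp w p"
  by (simp add: dotp_def left_diff_distrib sum_subtractf)
lemma dotp_diff_right: "dotp u (p - w) = dotp u p - dotp u w"
  by (simp add: dotp_def right_diff_distrib sum_subtractf)
lemma dotp_add_right: "dotp u (p + w) = dotp u p + dotp u w"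
  by (simp add: dotp_def distrib_left sum.distrib)
lemma dotp_scale_right: "dotp u (c *s p) = c * dotp u p"
  by (simp add: dotp_def sum_distrib_left algebra_simps)
lemma dotp_zero_left[simp]: "dotp 0 p = 0"
  by (simp add: dotp_def)
lemma dotp_comm: "dotp u p = dotp p u"
  by (simp add: dotp_def mult.commute)
lemma dotp_axis_left: "dotp (axis i c) p = c * p$i"
proof -
  have "(\<Sum>j\<in>UNIV. (axis i c)$j * p$j) = (\<Sum>j\<in>UNIV. if j = i then c * p$j else 0)"
    by (rule sum.cong) (auto simp: axis_def)
  then show ?thesis by (simp add: dotp_def)
qed
lemma dotp_axis_right: "dotp u (axis i c) = u$i * c"
  by (simp add: dotp_comm[of u] dotp_axis_left mult.commute)

lemma dotp_one:
  fixes p :: "'a::field^'n"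
  assumes "p \<noteq> 0" shows "\<exists>d. dotp d p = 1"
proof -
  obtain i where "p$i \<noteq> 0" using assms by (auto simp: vec_eq_iff)
  then show ?thesis by (intro exI[of _ "axis i (inverse (p$i))"]) (simp add: dotp_axis_left)
qed

lemma dotp_prop:
  fixes p p' :: "'a::field^'n"
  assumes "p \<noteq> 0" "\<forall>u. dotp u p = 0 \<longrightarrow> dotp u p' = 0"
  shows "\<exists>c. p' = c *s p"
proof -
  obtain d where d: "dotp d p = 1" using dotp_one[OF assms(1)] by blast
  have "p'$j = (dotp d p' *s p)$j" for j
  proof -
    let ?u = "axis j 1 + (- p$j) *s d"
    have e: "dotp ?u q = q$j - p$j * dotp d q" for q
      by (simp add: dotp_diff_left dotp_scale_left dotp_axis_left)
    have "dotp ?u p = 0" using d e[of p] by simp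
    then have "dotp ?u p' = 0" using assms(2) by blast
    then show ?thesis using e[of p'] by (simp add: algebra_simps)
  qed
  then show ?thesis by (auto simp: vec_eq_iff)
qed

lemma fiber_count:
  fixes D :: "('a::{field,finite}^'n) set" and g :: "'a^'n \<Rightarrow> 'a"
  assumes addD: "\<And>x y. x\<in>D \<Longrightarrow> y\<in>D \<Longrightarrow> x + y \<in> D"
  and scD: "\<And>c x. x\<in>D \<Longrightarrow> c *s x \<in> D"
  and gadd: "\<And>x y. g (x + y) = g x + g y"
  and gsc: "\<And>c x. g (c *s x) = c * g x"
  and d: "d \<in> D" "g d = 1"
  shows "card D = CARD('a) * card {u\<in>D. g u = 0}"
proof -
  define F where "F c = {u\<in>D. g u = c}" for c
  have "D = (\<Union>c\<in>UNIV. F c)" by (auto simp: F_def)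
  then have "card D = card (\<Union>c\<in>UNIV. F c)" by (rule arg_cong)
  also have "\<dots> = (\<Sum>c\<in>UNIV. card (F c))"
    by (rule card_UN_disjoint) (auto simp: F_def)
  also have "\<dots> = (\<Sum>c\<in>(UNIV::'a set). card (F 0))"
  proof (rule sum.cong[OF refl])
    fix c :: 'a
    have "F c = (\<lambda>u. u + c *s d) ` F 0"
    proof
      show "(\<lambda>u. u + c *s d) ` F 0 \<subseteq> F c"
        using d by (auto simp: F_def gadd gsc intro: addD scD)
      show "F c \<subseteq> (\<lambda>u. u + c *s d) ` F 0"
      proof
        fix w assume w: "w \<in> F c"
        have w1: "w \<in> D" "g w = c" using w by (auto simp: F_def)
        have "w = (w + (-c) *s d) + c *s d" by (simp add: vec_eq_iff)
        moreover have "w + (-c) *s d \<in> D" by (rule addD[OF w1(1) scD[OF d(1)]])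
        moreover have "g (w + (-c) *s d) = 0" unfolding gadd gsc using w1 d by simp
        ultimately show "w \<in> (\<lambda>u. u + c *s d) ` F 0" unfolding F_def by blast
      qed
    qed
    moreover have "inj_on (\<lambda>u. u + c *s d) (F 0)" by (auto simp: inj_on_def)
    ultimately show "card (F c) = card (F 0)" by (simp add: card_image)
  qed
  finally show ?thesis by (simp add: F_def)
qed

lemma point_rep:
  fixes P :: "('a::field^'n) set"
  assumes "P \<in> proj_points" shows "\<exists>p. p \<noteq> 0 \<and> P = vec.span {p}"
proof -
  from assms have sub: "vec.subspace P" and dim: "vec.dim P = 1" by (auto simp: proj_points_def)
  obtain B where B: "B \<subseteq> P" "vec.independent B" "P \<subseteq> vec.span B" "card B = vec.dim P"
    using vec.basis_exists by blast
  then obtain p where Bp: "B = {p}" using dim card_1_singletonE by metis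
  have "p \<noteq> 0" using B(2) Bp vec.dependent_zero by blast
  moreover have "vec.span B \<subseteq> P" using B(1) sub by (rule vec.span_minimal)
  ultimately show ?thesis using B(3) Bp by blast
qed

definition Ker :: "'a::field^'n \<Rightarrow> ('a^'n) set" where "Ker u = {p. dotp u p = 0}"

lemma Ker_subspace: "vec.subspace (Ker u)"
  by (simp add: vec.subspace_def Ker_def dotp_add_right dotp_scale_right dotp_comm[of u 0])

lemma span_sub_Ker: "vec.span {p} \<subseteq> Ker u \<longleftrightarrow> dotp u p = 0"
  using vec.span_minimal[OF _ Ker_subspace, of "{p}" u] vec.span_base[of p "{p}"]
  by (auto simp: Ker_def)

lemma Ker_dim:
  fixes u :: "'a::field^'n"
  assumes "u \<noteq> 0" shows "vec.dim (Ker u) = CARD('n) - 1"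
proof -
  obtain d where d: "dotp d u = 1" using dotp_one[OF assms] by blast
  then have d': "dotp u d = 1" by (simp add: dotp_comm)
  have spK: "vec.span (Ker u) = Ker u" using Ker_subspace by simp
  have "d \<notin> Ker u" using d' by (simp add: Ker_def)
  then have "d \<notin> vec.span (Ker u)" by (subst spK)
  then have "vec.dim (insert d (Ker u)) = vec.dim (Ker u) + 1"
    using vec.dim_insert[of d "Ker u"] by simp
  moreover have "vec.span (insert d (Ker u)) = UNIV"
  proof -
    have "w \<in> vec.span (insert d (Ker u))" for w
    proof -
      have "w = (w + (- dotp u w) *s d) + dotp u w *s d" by (simp add: vec_eq_iff)
      moreover have "w + (- dotp u w) *s d \<in> Ker u"
        using d' by (simp add: Ker_def dotp_diff_right dotp_scale_right)
      then have a: "w + (- dotp u w) *s d \<in> vec.span (insert d (Ker u))"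
        by (intro vec.span_base insertI2)
      have b: "dotp u w *s d \<in> vec.span (insert d (Ker u))"
        by (rule vec.span_scale[OF vec.span_base[OF insertI1]])
      from vec.span_add[OF a b] \<open>w = _\<close> show ?thesis by simp
    qed
    then show ?thesis by blast
  qed
  then have "vec.dim (insert d (Ker u)) = CARD('n)"
    by (metis vec.dim_span vec_dim_card)
  ultimately show ?thesis by simp
qed


lemma count1:
  fixes p :: "'a::{field,finite}^'n"
  assumes "p \<noteq> 0"
  shows "CARD('a) * card {u::'a^'n. dotp u p = 0} = CARD('a) ^ CARD('n)"
proof -
  obtain d where d: "dotp d p = 1" using dotp_one[OF assms] dotp_comm by metis
  have "card (UNIV::('a^'n) set) = CARD('a) * card {u\<in>UNIV. dotp u p = 0}"
    by (rule fiber_count[where d=d]) (auto simp: dotp_add_left dotp_scale_left d)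
  then show ?thesis by simp
qed

lemma count2:
  fixes p p' :: "'a::{field,finite}^'n"
  assumes "p \<noteq> 0" "\<not> (\<exists>c. p' = c *s p)"
  shows "CARD('a) * card {u::'a^'n. dotp u p = 0 \<and> dotp u p' = 0} = card {u::'a^'n. dotp u p = 0}"
proof -
  obtain w where w: "dotp w p = 0" "dotp w p' \<noteq> 0" using dotp_prop[OF assms(1)] assms(2) by blast
  define d where "d = inverse (dotp w p') *s w"
  have d: "dotp d p = 0" "dotp d p' = 1" using w by (auto simp: d_def dotp_scale_left)
  have "card {u. dotp u p = 0} = CARD('a) * card {u\<in>{u. dotp u p = 0}. dotp u p' = 0}"
    by (rule fiber_count[where d=d]) (auto simp: dotp_add_left dotp_scale_left d)
  then show ?thesis by (simp add: conj_commute)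
qed

lemma span_scale_eq:
  fixes p :: "'a::field^'n"
  assumes "c \<noteq> 0" shows "vec.span {c *s p} = vec.span {p}"
proof
  show "vec.span {c *s p} \<subseteq> vec.span {p}"
    by (rule vec.span_minimal) (auto intro: vec.span_scale vec.span_base)
  have "p = inverse c *s (c *s p)" using assms by (simp add: vec_eq_iff)
  then have "p \<in> vec.span {c *s p}" by (metis vec.span_scale vec.span_base singletonI)
  then show "vec.span {p} \<subseteq> vec.span {c *s p}"
    using vec.span_minimal[of "{p}" "vec.span {c *s p}"] vec.subspace_span by blast
qed

lemma ind_sum:
  assumes "finite A"
  shows "(\<Sum>x\<in>A. if C x then (M::real) else 0) = M * real (card {x\<in>A. C x})"
  using sum.inter_filter[OF assms, of "\<lambda>_. M" C, symmetric] by simp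


theorem mainTheorem4:
  fixes S :: "('a::{field,finite} ^ 'n) set set"
    and q r :: nat
  assumes q_def: "q = CARD('a)"
    and r: "r \<ge> 1"
    and pts: "S \<subseteq> proj_points"
    and span: "spanning_pointset S"
    and div: "divisible_pointset (q ^ r) S"
    and size: "card S = q ^ (r + 1)"
  shows "real (card {H \<in> proj_hyperplanes. \<forall>P \<in> S. \<not> P \<subseteq> H})
           \<ge> (real q ^ (CARD('n) - r - 1) - 1) / (real q - 1)"
proof (cases "CARD('n) < r + 2")
  case True
  then have "CARD('n) - r - 1 = 0" by simp
  then show ?thesis by simp
next
  case False
  define m where "m = CARD('n) - 2"
  have v: "CARD('n) = m + 2" and mr: "r \<le> m" using False by (simp_all add: m_def)
  define Q where "Q = real q"
  have q2: "q \<ge> 2"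
  proof -
    have "card {0::'a, 1} \<le> CARD('a)" by (rule card_mono) auto
    then show ?thesis using q_def by simp
  qed
  then have Q2: "Q \<ge> 2" by (simp add: Q_def)
  have finS: "finite S" by simp
  define rep where "rep P = (SOME p. p \<noteq> 0 \<and> P = vec.span {p})" for P :: "('a^'n) set"
  have rep: "rep P \<noteq> 0 \<and> P = vec.span {rep P}" if "P \<in> S" for P
  proof -
    have "\<exists>p. p \<noteq> 0 \<and> P = vec.span {p}" using point_rep[OF subsetD[OF pts that]] .
    then show ?thesis unfolding rep_def by (rule someI_ex)
  qed
  have subK: "P \<subseteq> Ker u \<longleftrightarrow> dotp u (rep P) = 0" if "P \<in> S" for P u
  proof -
    have eq: "P = vec.span {rep P}" using conjunct2[OF rep[OF that]] .
    have "(P \<subseteq> Ker u) = (vec.span {rep P} \<subseteq> Ker u)"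
      using eq by (rule arg_cong[where f="\<lambda>X. X \<subseteq> Ker u"])
    then show ?thesis using span_sub_Ker by blast
  qed
  define x where "x u = card {P\<in>S. dotp u (rep P) = 0}" for u
  have xsum: "real (x u) = (\<Sum>P\<in>S. if dotp u (rep P) = 0 then 1 else 0)" for u
    using ind_sum[OF finS, of "\<lambda>P. dotp u (rep P) = 0" 1] by (simp add: x_def)
  have c1: "real (card {u::'a^'n. dotp u (rep P) = 0}) = Q^(m+1)" if "P \<in> S" for P
  proof -
    have "q * card {u::'a^'n. dotp u (rep P) = 0} = q * q^(m+1)"
      using count1[of "rep P"] conjunct1[OF rep[OF that]] v q_def by simp
    then have "card {u::'a^'n. dotp u (rep P) = 0} = q^(m+1)" using q2 by simp
    then show ?thesis by (simp add: Q_def)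
  qed
  have c2: "real (card {u::'a^'n. dotp u (rep P) = 0 \<and> dotp u (rep P') = 0}) = Q^m"
    if "P \<in> S" "P' \<in> S" "P \<noteq> P'" for P P'
  proof -
    have np: "\<not> (\<exists>c. rep P' = c *s rep P)"
    proof
      assume "\<exists>c. rep P' = c *s rep P"
      then obtain c where c: "rep P' = c *s rep P" by blast
      then have "c \<noteq> 0" using conjunct1[OF rep[OF that(2)]] by auto
      then have "vec.span {rep P'} = vec.span {rep P}" using c span_scale_eq by metis
      have "P = vec.span {rep P}" by (rule conjunct2[OF rep[OF that(1)]])
      also have "\<dots> = vec.span {rep P'}" using \<open>vec.span {rep P'} = vec.span {rep P}\<close> by (rule sym)
      also have "\<dots> = P'" by (rule sym[OF conjunct2[OF rep[OF that(2)]]])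
      finally show False using that(3) by simp
    qed
    have "q * card {u::'a^'n. dotp u (rep P) = 0 \<and> dotp u (rep P') = 0} = q * q^m"
    proof -
      have "real (card {u::'a^'n. dotp u (rep P) = 0}) = real (q * q^m)"
        using c1[OF that(1)] by (simp add: Q_def)
      then have "card {u::'a^'n. dotp u (rep P) = 0} = q * q^m" by (simp only: of_nat_eq_iff)
      then show ?thesis using count2[OF _ np] conjunct1[OF rep[OF that(1)]] q_def by simp
    qed
    then show ?thesis using q2 by (simp add: Q_def)
  qed
  have cardV: "real (card (UNIV::('a^'n) set)) = Q^(m+2)"
    using v q_def by (simp add: Q_def)
  have S1: "(\<Sum>u\<in>UNIV. real (x u)) = real (card S) * Q^(m+1)"
  proof -
    have "(\<Sum>u\<in>UNIV. real (x u)) = (\<Sum>u\<in>UNIV. \<Sum>P\<in>S. if dotp u (rep P) = 0 then 1 else 0)"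
      by (simp add: xsum)
    also have "\<dots> = (\<Sum>P\<in>S. \<Sum>u\<in>UNIV. if dotp u (rep P) = 0 then 1 else 0)"
      by (rule sum.swap)
    also have "\<dots> = (\<Sum>P\<in>S. Q^(m+1))"
      by (rule sum.cong[OF refl]) (simp add: ind_sum c1)
    finally show ?thesis by simp
  qed
  have S2: "(\<Sum>u\<in>UNIV. real (x u)^2) = real (card S) * (Q^(m+1) + (real (card S) - 1) * Q^m)"
  proof -
    have "(\<Sum>u\<in>UNIV. real (x u)^2) = (\<Sum>u\<in>UNIV. \<Sum>P\<in>S. \<Sum>P'\<in>S.
            if dotp u (rep P) = 0 \<and> dotp u (rep P') = 0 then 1 else 0)"
    proof -
      have ii: "\<And>A B. (if A then 1 else 0) * (if B then 1 else 0) = (if A \<and> B then (1::real) else 0)"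
        by simp
      show ?thesis by (simp only: xsum power2_eq_square sum_product ii)
    qed
    also have "\<dots> = (\<Sum>P\<in>S. \<Sum>u\<in>UNIV. \<Sum>P'\<in>S.
            if dotp u (rep P) = 0 \<and> dotp u (rep P') = 0 then 1 else 0)"
      by (rule sum.swap)
    also have "\<dots> = (\<Sum>P\<in>S. \<Sum>P'\<in>S. \<Sum>u\<in>UNIV.
            if dotp u (rep P) = 0 \<and> dotp u (rep P') = 0 then 1 else 0)"
      by (rule sum.cong[OF refl], rule sum.swap)
    also have "\<dots> = (\<Sum>P\<in>S. \<Sum>P'\<in>S. Q^m + (if P' = P then Q^(m+1) - Q^m else 0))"
    proof (intro sum.cong[OF refl])
      fix P P' assume PS: "P \<in> S" and P'S: "P' \<in> S"
      show "(\<Sum>u\<in>UNIV. if dotp u (rep P) = 0 \<and> dotp u (rep P') = 0 then 1 else 0) =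
          Q^m + (if P' = P then Q^(m+1) - Q^m else 0)"
        using c1[OF PS] c2[OF PS P'S] by (simp add: ind_sum)
    qed
    also have "\<dots> = (\<Sum>P\<in>S. real (card S) * Q^m + (Q^(m+1) - Q^m))"
      by (rule sum.cong[OF refl]) (simp add: sum.distrib)
    finally show ?thesis by (simp add: algebra_simps)
  qed
  define F where "F y = (y - Q^r) * (y - (Q-1) * Q^r)" for y
  have Fexp: "F y = y^2 - Q * Q^r * y + (Q-1) * Q^r * Q^r" for y
    by (simp add: F_def power2_eq_square algebra_simps)
  have N: "real (card S) = Q * Q^r" using size by (simp add: Q_def)
  have sumF: "(\<Sum>u\<in>UNIV. F (real (x u))) = (Q-1) * Q * Q^r * Q^m"
  proof -
    have "(\<Sum>u\<in>UNIV. F (real (x u))) = (\<Sum>u\<in>UNIV. real (x u)^2) - Q * Q^r * (\<Sum>u\<in>UNIV. real (x u))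
        + real (card (UNIV::('a^'n) set)) * ((Q-1) * Q^r * Q^r)"
      by (simp add: Fexp sum.distrib sum_subtractf sum_distrib_left)
    also have "\<dots> = (Q-1) * Q * Q^r * Q^m"
      unfolding S1 S2 cardV N by (simp add: algebra_simps power_add)
    finally show ?thesis .
  qed
  define Z where "Z = {u::'a^'n. u \<noteq> 0 \<and> x u = 0}"
  have Kh: "Ker u \<in> proj_hyperplanes" if "u \<noteq> 0" for u
    using Ker_subspace Ker_dim[OF that] by (simp add: proj_hyperplanes_def)
  have xlt: "x u < card S" if "u \<noteq> 0" for u
  proof -
    have sub: "{P\<in>S. dotp u (rep P) = 0} \<subseteq> S" by auto
    have "x u \<le> card S" unfolding x_def by (rule card_mono[OF finS sub])
    moreover have "x u \<noteq> card S"
    proof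
      assume "x u = card S"
      then have "{P\<in>S. dotp u (rep P) = 0} = S"
        using card_subset_eq[OF finS sub] by (simp add: x_def)
      then have "\<forall>P\<in>S. P \<subseteq> Ker u" using subK by blast
      then have "\<Union>S \<subseteq> Ker u" by blast
      then have "vec.span (\<Union>S) \<subseteq> Ker u" using Ker_subspace vec.span_minimal by blast
      then have "UNIV \<subseteq> Ker u" using span by (simp add: spanning_pointset_def)
      then have "u$i = 0" for i
      proof -
        have "axis i 1 \<in> Ker u" using \<open>UNIV \<subseteq> Ker u\<close> by blast
        then show ?thesis by (simp add: Ker_def dotp_axis_right)
      qed
      then show False using that by (auto simp: vec_eq_iff)
    qed
    ultimately show ?thesis by simp
  qed
  have bound: "F (real (x u)) \<le> (if u = 0 \<or> x u = 0 then (Q-1) * Q^r * Q^r else 0)" for u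
  proof (cases "u = 0")
    case True
    then have "x u = card S" by (simp add: x_def)
    then show ?thesis using True N by (simp add: F_def algebra_simps)
  next
    case False
    have "pts_in S (Ker u) = x u"
      unfolding pts_in_def x_def using subK by (metis (no_types, lifting))
    then have "x u mod q^r = card S mod q^r"
      using div Kh[OF False] unfolding divisible_pointset_def by metis
    also have "\<dots> = 0" using size by simp
    finally obtain k where k: "x u = q^r * k" by (metis mod_0_imp_dvd dvdE)
    have "q^r * k < q^r * q" using xlt[OF False] k size by (simp add: mult.commute)
    then have kq: "k < q" by simp
    show ?thesis
    proof (cases "x u = 0")
      case True
      then show ?thesis by (simp add: F_def algebra_simps)
    next
      case xn: False
      then have k1: "k \<ge> 1" using k by (cases k) auto
      have rx: "real (x u) = Q^r * real k" using k by (simp add: Q_def)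
      have "F (real (x u)) = (Q^r * (real k - 1)) * (Q^r * (real k - (Q - 1)))"
        unfolding F_def rx by (simp add: algebra_simps)
      also have "\<dots> \<le> 0"
      proof (rule mult_nonneg_nonpos)
        show "0 \<le> Q^r * (real k - 1)" using k1 Q2 by simp
        have "real k \<le> Q - 1" using kq by (simp add: Q_def)
        then show "Q^r * (real k - (Q - 1)) \<le> 0" using Q2 by (simp add: mult_nonneg_nonpos)
      qed
      finally show ?thesis using xn False by simp
    qed
  qed
  have "(Q-1) * Q * Q^r * Q^m \<le> (\<Sum>u\<in>UNIV. if u = 0 \<or> x u = 0 then (Q-1) * Q^r * Q^r else 0)"
    unfolding sumF[symmetric] by (rule sum_mono) (rule bound)
  also have "\<dots> = (Q-1) * Q^r * Q^r * real (card {u\<in>UNIV. u = 0 \<or> x u = 0})"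
    by (rule ind_sum) simp
  also have "{u\<in>UNIV. u = 0 \<or> x u = 0} = insert 0 Z" by (auto simp: Z_def)
  also have "card (insert 0 Z) = card Z + 1" by (simp add: Z_def)
  finally have ineq: "(Q-1) * Q^r * (Q * Q^m) \<le> (Q-1) * Q^r * (Q^r * (real (card Z) + 1))"
    by (simp add: algebra_simps)
  have pos: "(Q-1) * Q^r > 0" using Q2 by simp
  have "Q * Q^m \<le> Q^r * (real (card Z) + 1)"
    using mult_left_le_imp_le[OF ineq pos] .
  moreover have "Q * Q^m = Q^r * Q^(CARD('n) - r - 1)"
    using v mr by (simp add: power_add[symmetric])
  ultimately have zb: "Q^(CARD('n) - r - 1) \<le> real (card Z) + 1"
    using Q2 by simp
  define T where "T = {H \<in> proj_hyperplanes. \<forall>P \<in> S. \<not> P \<subseteq> (H::('a^'n) set)}"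
  have KZ: "Ker ` Z \<subseteq> T"
  proof
    fix H assume "H \<in> Ker ` Z"
    then obtain u where u: "u \<in> Z" "H = Ker u" by blast
    then have "{P\<in>S. dotp u (rep P) = 0} = {}" using finS by (simp add: Z_def x_def)
    then have "\<forall>P\<in>S. \<not> P \<subseteq> Ker u" using subK by blast
    then show "H \<in> T" using u Kh by (auto simp: T_def Z_def)
  qed
  have fib: "card {u\<in>Z. Ker u = H} \<le> q - 1" if H: "H \<in> Ker ` Z" for H
  proof -
    obtain u0 where u0: "u0 \<in> Z" "H = Ker u0" using H by blast
    have "{u\<in>Z. Ker u = H} \<subseteq> (\<lambda>c. c *s u0) ` (UNIV - {0})"
    proof
      fix u assume u: "u \<in> {u\<in>Z. Ker u = H}"
      then have "\<forall>w. dotp w u0 = 0 \<longrightarrow> dotp w u = 0"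
        using u0 by (auto simp: Ker_def dotp_comm set_eq_iff)
      moreover have "u0 \<noteq> 0" using u0 by (simp add: Z_def)
      ultimately obtain c where c: "u = c *s u0" using dotp_prop[of u0 u] by blast
      then have "c \<noteq> 0" using u by (auto simp: Z_def)
      then show "u \<in> (\<lambda>c. c *s u0) ` (UNIV - {0})" using c by blast
    qed
    then have "card {u\<in>Z. Ker u = H} \<le> card ((\<lambda>c. c *s u0) ` (UNIV - {0::'a}))"
      by (rule card_mono[rotated]) simp
    also have "\<dots> \<le> card (UNIV - {0::'a})" by (rule card_image_le) simp
    also have "\<dots> = q - 1" using q_def by (simp add: card_Diff_singleton)
    finally show ?thesis .
  qed
  have "card Z \<le> card (\<Union>H\<in>Ker ` Z. {u\<in>Z. Ker u = H})" by (rule card_mono) auto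
  also have "\<dots> \<le> (\<Sum>H\<in>Ker ` Z. card {u\<in>Z. Ker u = H})" by (rule card_UN_le) simp
  also have "\<dots> \<le> card (Ker ` Z) * (q - 1)" using sum_bounded_above[of "Ker ` Z", OF fib] by simp
  also have "\<dots> \<le> card T * (q - 1)" by (rule mult_right_mono[OF card_mono[OF _ KZ]]) auto
  finally have cz: "card Z \<le> card T * (q - 1)" .
  have "real (card Z) \<le> real (card T * (q - 1))" using cz by (simp only: of_nat_le_iff)
  then have "real (card Z) \<le> real (card T) * (Q - 1)"
    using q2 by (simp add: Q_def of_nat_diff)
  with zb have "Q^(CARD('n) - r - 1) - 1 \<le> real (card T) * (Q - 1)" by linarith
  then show ?thesis using Q2 by (simp add: T_def Q_def divide_le_eq)
qed

end
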